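(* Suppose $P_\mu$ is the Bernoulli distribution with mean $\mu$, and fix $\theta>2/3$. Then $q_\theta(\mu)\ge\exp(-0.5)/3$ for all $\mu\ge(1+\theta)/2$.
   Context: For $\mu>\theta$, with $X_1,X_2,\dots$ i.i.d. $\sim P_\mu$ and $M_n=\frac1n\sum_{i=1}^nX_i$, $q_\theta(\mu):=\mathbb{P}[M_n>\theta\text{ for all }n\ge1]$. *)

theory Defs
  imports "HOL-Probability.Probability"
begin

text \<open>Canonical i.i.d. model: the infinite product of Bernoulli(mu) laws on bool.
  Coordinate i (i = 0,1,2,...) is the outcome X_(i+1), as the 0/1 value of_bool (w i).\<close>

definition bern_seq :: "real \<Rightarrow> (nat \<Rightarrow> bool) measure" where
  "bern_seq \<mu> = PiM UNIV (\<lambda>_::nat. measure_pmf (bernoulli_pmf \<mu>))"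

definition sample_mean :: "(nat \<Rightarrow> bool) \<Rightarrow> nat \<Rightarrow> real" where
  "sample_mean w n = (\<Sum>i<n. of_bool (w i)) / real n"

definition q_theta :: "real \<Rightarrow> real \<Rightarrow> real" where
  "q_theta \<theta> \<mu> = measure (bern_seq \<mu>)
     {w \<in> space (bern_seq \<mu>). \<forall>n\<ge>1. sample_mean w n > \<theta>}"

end

theory Submission
  imports Defs
begin

lemma space_bern: "space (bern_seq \<mu>) = UNIV"
  by (simp add: bern_seq_def space_PiM)

lemma rec_meas:
  assumes A: "A \<in> sets (bern_seq \<mu>)" and mu: "0 \<le> \<mu>" "\<mu> \<le> 1"
  shows "measure (bern_seq \<mu>) A = \<mu> * measure (bern_seq \<mu>) {\<omega>. case_nat True \<omega> \<in> A}
     + (1-\<mu>) * measure (bern_seq \<mu>) {\<omega>. case_nat False \<omega> \<in> A}"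
proof -
  define M where "M = measure_pmf (bernoulli_pmf \<mu>)"
  interpret prob_space M unfolding M_def by (rule prob_space_measure_pmf)
  interpret S: sequence_space M ..
  have SSp: "prob_space (\<Pi>\<^sub>M i::nat\<in>UNIV. M)" by (rule prob_space_PiM) (rule prob_space_axioms)
  interpret SS: prob_space "\<Pi>\<^sub>M i::nat\<in>UNIV. M" by (rule SSp)
  have Sdef: "bern_seq \<mu> = S.S" unfolding bern_seq_def M_def by simp
  have A': "A \<in> sets S.S" using A Sdef by simp
  let ?f = "(\<lambda>(s, \<omega>). case_nat s \<omega>) :: bool \<times> (nat \<Rightarrow> bool) \<Rightarrow> (nat \<Rightarrow> bool)"
  have fm: "?f \<in> measurable (M \<Otimes>\<^sub>M S.S) S.S"
    by measurable
  have "emeasure S.S A = emeasure (distr (M \<Otimes>\<^sub>M S.S) S.S ?f) A"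
    by (simp add: S.PiM_iter)
  also have "\<dots> = emeasure (M \<Otimes>\<^sub>M S.S) (?f -` A \<inter> space (M \<Otimes>\<^sub>M S.S))"
    by (rule emeasure_distr[OF fm A'])
  also have "\<dots> = (\<integral>\<^sup>+x. emeasure S.S (Pair x -` (?f -` A \<inter> space (M \<Otimes>\<^sub>M S.S))) \<partial>M)"
    by (rule sigma_finite_measure.emeasure_pair_measure_alt[OF prob_space_imp_sigma_finite[OF SSp]]) (use fm A' in measurable)
  also have "\<dots> = (\<integral>\<^sup>+x. emeasure S.S {\<omega>. case_nat x \<omega> \<in> A} \<partial>M)"
    by (intro nn_integral_cong arg_cong2[where f=emeasure]) (auto simp: space_pair_measure space_PiM M_def)
  also have "\<dots> = emeasure S.S {\<omega>. case_nat True \<omega> \<in> A} * ennreal \<mu> + emeasure S.S {\<omega>. case_nat False \<omega> \<in> A} * ennreal (1-\<mu>)"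
    unfolding M_def using mu by simp
  also have "\<dots> = ennreal (\<mu> * measure S.S {\<omega>. case_nat True \<omega> \<in> A} + (1-\<mu>) * measure S.S {\<omega>. case_nat False \<omega> \<in> A})"
    using mu by (simp add: finite_measure.emeasure_eq_measure[OF prob_space.finite_measure[OF SSp]] ennreal_mult' ennreal_plus mult.commute)
  finally have "ennreal (measure S.S A) = ennreal (\<mu> * measure S.S {\<omega>. case_nat True \<omega> \<in> A} + (1-\<mu>) * measure S.S {\<omega>. case_nat False \<omega> \<in> A})"
    unfolding finite_measure.emeasure_eq_measure[OF prob_space.finite_measure[OF SSp]] .
  then show ?thesis using mu unfolding Sdef
    by (subst (asm) ennreal_inj) auto
qed
definition Ev :: "real \<Rightarrow> nat \<Rightarrow> real \<Rightarrow> (nat \<Rightarrow> bool) set" where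
  "Ev \<theta> N s = {w. \<exists>n\<le>N. s + (\<Sum>i<n. (of_bool (w i) - \<theta>)) \<le> 0}"

lemma Ev_sets: "Ev \<theta> N s \<in> sets (bern_seq \<mu>)"
proof -
  have "Ev \<theta> N s = {w \<in> space (bern_seq \<mu>). \<exists>n\<le>N. s + (\<Sum>i<n. (of_bool (w i) - \<theta>)) \<le> 0}"
    by (auto simp: Ev_def space_bern)
  also have "\<dots> \<in> sets (bern_seq \<mu>)"
    unfolding bern_seq_def by measurable
  finally show ?thesis .
qed

lemma shift_sum: "(\<Sum>i<Suc m. (of_bool (case_nat x \<omega> i) - \<theta>)) = (of_bool x - \<theta>) + (\<Sum>i<m. (of_bool (\<omega> i) - (\<theta>::real)))"
  by (subst sum.lessThan_Suc_shift) simp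

lemma Ev_shift:
  assumes "s > 0"
  shows "{\<omega>. case_nat x \<omega> \<in> Ev \<theta> (Suc N) s} = Ev \<theta> N (s + of_bool x - \<theta>)"
proof (intro set_eqI iffI)
  fix \<omega> assume "\<omega> \<in> {\<omega>. case_nat x \<omega> \<in> Ev \<theta> (Suc N) s}"
  then obtain n where n: "n \<le> Suc N" "s + (\<Sum>i<n. (of_bool (case_nat x \<omega> i) - \<theta>)) \<le> 0"
    by (auto simp: Ev_def)
  then obtain m where m: "n = Suc m" using assms by (cases n) auto
  show "\<omega> \<in> Ev \<theta> N (s + of_bool x - \<theta>)"
    using n unfolding m shift_sum Ev_def by (intro CollectI exI[of _ m]) simp
next
  fix \<omega> assume "\<omega> \<in> Ev \<theta> N (s + of_bool x - \<theta>)"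
  then obtain m where m: "m \<le> N" "s + of_bool x - \<theta> + (\<Sum>i<m. (of_bool (\<omega> i) - \<theta>)) \<le> 0"
    by (auto simp: Ev_def)
  have "s + (\<Sum>i<Suc m. (of_bool (case_nat x \<omega> i) - \<theta>)) \<le> 0"
    unfolding shift_sum using m by simp
  moreover have "Suc m \<le> Suc N" using m by simp
  ultimately show "\<omega> \<in> {\<omega>. case_nat x \<omega> \<in> Ev \<theta> (Suc N) s}"
    unfolding Ev_def by blast
qed

lemma prob_le1: "measure (bern_seq \<mu>) A \<le> 1"
proof -
  interpret prob_space "bern_seq \<mu>" unfolding bern_seq_def
    by (intro prob_space_PiM prob_space_measure_pmf)
  show ?thesis by (rule prob_le_1)
qed

lemma key_phi:
  fixes \<theta> \<mu> :: real
  assumes "0 < \<theta>" "\<theta> < 1" "1 - \<mu> \<le> (1 - \<theta>) / 2" "\<mu> \<le> 1"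
  shows "\<mu> * exp (-(1-\<theta>)) + (1-\<mu>) * exp \<theta> \<le> 1"
proof -
  define e where "e = 1 - \<theta>"
  have e: "0 < e" "e < 1" using assms by (auto simp: e_def)
  have ee: "exp \<theta> = exp 1 * exp (-e)" by (simp add: e_def flip: exp_add)
  have e3: "exp (1::real) \<le> 3" using exp_le by simp
  have "\<mu> * exp (-e) + (1-\<mu>) * exp \<theta> = exp (-e) * (1 + (1-\<mu>) * (exp 1 - 1))"
    by (simp add: ee algebra_simps)
  also have "\<dots> \<le> exp (-e) * (1 + e)"
  proof (intro mult_left_mono)
    have "(1-\<mu>) * (exp 1 - 1) \<le> (e/2) * (exp 1 - 1)"
      using assms e_def by (intro mult_right_mono) auto
    also have "\<dots> \<le> e" using e e3 by (simp add: field_simps)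
    finally show "1 + (1-\<mu>) * (exp 1 - 1) \<le> 1 + e" by simp
  qed simp
  also have "\<dots> \<le> exp (-e) * exp e" by (intro mult_left_mono) (auto simp: exp_ge_add_one_self add.commute)
  also have "\<dots> = 1" by (simp flip: exp_add)
  finally show ?thesis by (simp add: e_def)
qed

lemma lemma_exp:
  fixes \<theta> \<mu> :: real
  assumes "0 < \<theta>" "\<theta> < 1" "1 - \<mu> \<le> (1 - \<theta>) / 2" "\<mu> \<le> 1" "0 \<le> \<mu>"
  shows "measure (bern_seq \<mu>) (Ev \<theta> N s) \<le> exp (-s)"
proof (induction N arbitrary: s)
  case 0
  show ?case
  proof (cases "s \<le> 0")
    case True
    then show ?thesis using prob_le1[of \<mu>] by (smt (verit) one_le_exp_iff)
  next
    case False
    then have "Ev \<theta> 0 s = {}" by (auto simp: Ev_def)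
    then show ?thesis by simp
  qed
next
  case (Suc N)
  show ?case
  proof (cases "s \<le> 0")
    case True
    then show ?thesis using prob_le1[of \<mu>] by (smt (verit) one_le_exp_iff)
  next
    case False
    have "measure (bern_seq \<mu>) (Ev \<theta> (Suc N) s) =
      \<mu> * measure (bern_seq \<mu>) (Ev \<theta> N (s + 1 - \<theta>)) + (1-\<mu>) * measure (bern_seq \<mu>) (Ev \<theta> N (s - \<theta>))"
      using rec_meas[OF Ev_sets, of \<mu> \<theta> "Suc N" s] Ev_shift[of s] False assms by simp
    also have "\<dots> \<le> \<mu> * exp (-(s + 1 - \<theta>)) + (1-\<mu>) * exp (-(s - \<theta>))"
      using Suc.IH[of "s + 1 - \<theta>"] Suc.IH[of "s - \<theta>"] assms by (intro add_mono mult_left_mono) auto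
    also have "\<dots> = exp (-s) * (\<mu> * exp (-(1-\<theta>)) + (1-\<mu>) * exp \<theta>)"
      by (simp add: algebra_simps flip: exp_add)
    also have "\<dots> \<le> exp (-s) * 1"
      using key_phi[OF assms(1-4)] by (intro mult_left_mono) auto
    finally show ?thesis by simp
  qed
qed

lemma lemma_lin:
  fixes \<theta> \<mu> :: real
  assumes "0 < \<theta>" "\<theta> < 1" "1 - \<mu> \<le> (1 - \<theta>) / 2" "\<mu> \<le> 1" "0 \<le> \<mu>"
  shows "\<forall>j s. s > 0 \<longrightarrow> s + real j * (1-\<theta>) \<ge> 1 \<longrightarrow>
     measure (bern_seq \<mu>) (Ev \<theta> N s) \<le> 1 - \<mu>^j * (1 - exp (-1))"
proof (induction N)
  case 0
  show ?case
  proof (intro allI impI)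
    fix j and s :: real assume "s > 0"
    then have "Ev \<theta> 0 s = {}" by (auto simp: Ev_def)
    moreover have "\<mu>^j \<le> 1" using assms by (simp add: power_le_one)
    moreover have "1 - exp (-1::real) \<le> 1" by simp
    moreover have "0 \<le> 1 - exp (-1::real)" by simp
    ultimately show "measure (bern_seq \<mu>) (Ev \<theta> 0 s) \<le> 1 - \<mu>^j * (1 - exp (-1))"
      by (simp add: mult_le_one assms)
  qed
next
  case (Suc N)
  show ?case
  proof (intro allI impI)
    fix j and s :: real assume s: "s > 0" "s + real j * (1-\<theta>) \<ge> 1"
    show "measure (bern_seq \<mu>) (Ev \<theta> (Suc N) s) \<le> 1 - \<mu>^j * (1 - exp (-1))"
    proof (cases j)
      case 0
      then have "s \<ge> 1" using s by simp
      then have "exp (-s) \<le> exp (-1)" by simp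
      with lemma_exp[OF assms, of "Suc N" s] have "measure (bern_seq \<mu>) (Ev \<theta> (Suc N) s) \<le> exp (-1)" by linarith
      then show ?thesis using 0 by simp
    next
      case (Suc j')
      have "measure (bern_seq \<mu>) (Ev \<theta> (Suc N) s) =
        \<mu> * measure (bern_seq \<mu>) (Ev \<theta> N (s + 1 - \<theta>)) + (1-\<mu>) * measure (bern_seq \<mu>) (Ev \<theta> N (s - \<theta>))"
        using rec_meas[OF Ev_sets, of \<mu> \<theta> "Suc N" s] Ev_shift[of s] s assms by simp
      also have "\<dots> \<le> \<mu> * (1 - \<mu>^j' * (1 - exp (-1))) + (1-\<mu>) * 1"
      proof (intro add_mono mult_left_mono)
        show "measure (bern_seq \<mu>) (Ev \<theta> N (s + 1 - \<theta>)) \<le> 1 - \<mu>^j' * (1 - exp (-1))"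
          using Suc.IH s Suc assms by (auto simp: algebra_simps)
      qed (use prob_le1 assms in auto)
      also have "\<dots> = 1 - \<mu>^j * (1 - exp (-1))" using Suc by (simp add: algebra_simps)
      finally show ?thesis .
    qed
  qed
qed

definition Fs :: "real \<Rightarrow> nat \<Rightarrow> (nat \<Rightarrow> bool) set" where
  "Fs \<theta> N = {w. \<exists>n. 1 \<le> n \<and> n \<le> Suc N \<and> (\<Sum>i<n. (of_bool (w i) - \<theta>)) \<le> 0}"

lemma Fs_sets: "Fs \<theta> N \<in> sets (bern_seq \<mu>)"
proof -
  have "Fs \<theta> N = {w \<in> space (bern_seq \<mu>). \<exists>n\<in>{1..Suc N}. (\<Sum>i<n. (of_bool (w i) - \<theta>)) \<le> 0}"
    by (auto simp: Fs_def space_bern)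
  also have "\<dots> \<in> sets (bern_seq \<mu>)"
    unfolding bern_seq_def by measurable
  finally show ?thesis .
qed

lemma Fs_shift: "{\<omega>. case_nat x \<omega> \<in> Fs \<theta> N} = Ev \<theta> N (of_bool x - \<theta>)"
proof (intro set_eqI iffI)
  fix \<omega> assume "\<omega> \<in> {\<omega>. case_nat x \<omega> \<in> Fs \<theta> N}"
  then obtain n where n: "1 \<le> n" "n \<le> Suc N" "(\<Sum>i<n. (of_bool (case_nat x \<omega> i) - \<theta>)) \<le> 0"
    by (auto simp: Fs_def)
  then obtain m where m: "n = Suc m" by (cases n) auto
  show "\<omega> \<in> Ev \<theta> N (of_bool x - \<theta>)"
    using n unfolding m shift_sum Ev_def by (intro CollectI exI[of _ m]) simp
next
  fix \<omega> assume "\<omega> \<in> Ev \<theta> N (of_bool x - \<theta>)"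
  then obtain m where m: "m \<le> N" "of_bool x - \<theta> + (\<Sum>i<m. (of_bool (\<omega> i) - \<theta>)) \<le> 0"
    by (auto simp: Ev_def)
  have "(\<Sum>i<Suc m. (of_bool (case_nat x \<omega> i) - \<theta>)) \<le> 0"
    unfolding shift_sum using m by simp
  moreover have "Suc m \<le> Suc N" "1 \<le> Suc m" using m by simp_all
  ultimately show "\<omega> \<in> {\<omega>. case_nat x \<omega> \<in> Fs \<theta> N}"
    unfolding Fs_def by blast
qed

lemma final_num: "exp (-0.5) / 3 \<le> (1/3) * (1 - exp (-1::real))"
proof -
  define y where "y = exp (-0.5::real)"
  have y2: "exp (-1::real) = y * y" by (simp add: y_def flip: exp_add)
  have "(1::real) + 1/2 + (1/2)^2/2 \<le> exp (1/2)"
    by (rule exp_lower_Taylor_quadratic) simp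
  moreover have "(1/2::real)^2/2 = 1/8" by (simp add: power2_eq_square)
  ultimately have h: "13/8 \<le> exp (1/2::real)" by linarith
  have "y * exp (1/2) = 1" by (simp add: y_def flip: exp_add)
  then have "y * (13/8) \<le> 1" using h y_def
    by (smt (verit) exp_gt_zero mult_left_mono)
  moreover have "y > 0" by (simp add: y_def)
  ultimately have y8: "y \<le> 8/13" by linarith
  have "y * y \<le> (8/13) * y" using y8 \<open>y > 0\<close> by (intro mult_right_mono) auto
  then have "y \<le> 1 - y * y" using y8 by linarith
  then show ?thesis unfolding y2 by (simp add: y_def)
qed

theorem lemma2:
  fixes \<theta> \<mu> :: real
  assumes "\<theta> > 2/3"
    and "0 \<le> \<mu>" and "\<mu> \<le> 1"
    and "\<mu> > \<theta>"
    and "\<mu> \<ge> (1 + \<theta>) / 2"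
  shows "q_theta \<theta> \<mu> \<ge> exp (-0.5) / 3"
proof -
  interpret P: prob_space "bern_seq \<mu>" unfolding bern_seq_def
    by (intro prob_space_PiM prob_space_measure_pmf)
  define e where "e = 1 - \<theta>"
  have e: "0 < e" "e < 1/3" using assms by (auto simp: e_def)
  have A: "0 < \<theta>" "\<theta> < 1" "1 - \<mu> \<le> (1 - \<theta>) / 2" "\<mu> \<le> 1" "0 \<le> \<mu>"
    using assms by auto
  define c where "c = 1 - exp (-1::real)"
  define K where "K = nat \<lceil>1/e\<rceil>"
  have K1: "real K * e \<ge> 1" unfolding K_def using e
    by (smt (verit, best) le_nat_iff of_nat_nat pos_divide_le_eq real_nat_ceiling_ge)
  have "real K = of_int \<lceil>1/e\<rceil>" unfolding K_def using e by simp
  then have K2: "real K < 1/e + 1" using ceiling_correct[of "1/e"] by linarith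
  have Kpos: "K \<ge> 1" using K1 e by (cases K) auto
  have FN: "measure (bern_seq \<mu>) (Fs \<theta> N) \<le> 1 - \<mu>^K * c" for N
  proof -
    have "measure (bern_seq \<mu>) (Fs \<theta> N) =
      \<mu> * measure (bern_seq \<mu>) (Ev \<theta> N (1 - \<theta>)) + (1-\<mu>) * measure (bern_seq \<mu>) (Ev \<theta> N (0 - \<theta>))"
      using rec_meas[OF Fs_sets, of \<mu> \<theta> N] Fs_shift[of _ \<theta> N] A by simp
    also have "\<dots> \<le> \<mu> * (1 - \<mu>^(K-1) * c) + (1-\<mu>) * 1"
    proof (intro add_mono mult_left_mono)
      have "e + real (K-1) * e \<ge> 1" using K1 Kpos by (simp add: of_nat_diff algebra_simps)
      then show "measure (bern_seq \<mu>) (Ev \<theta> N (1 - \<theta>)) \<le> 1 - \<mu>^(K-1) * c"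
        using lemma_lin[OF A, of N, rule_format, of "1-\<theta>" "K-1"] e Kpos unfolding c_def e_def by (auto simp: of_nat_diff)
    qed (use prob_le1 A in auto)
    also have "\<dots> = 1 - \<mu>^K * c" using Kpos
      by (cases K) (auto simp: algebra_simps)
    finally show ?thesis .
  qed
  have inc: "incseq (Fs \<theta>)"
    by (rule incseq_SucI) (auto simp: Fs_def intro: le_SucI)
  have lim: "(\<lambda>N. measure (bern_seq \<mu>) (Fs \<theta> N)) \<longlonglongrightarrow> measure (bern_seq \<mu>) (\<Union>N. Fs \<theta> N)"
    by (rule P.finite_Lim_measure_incseq) (use Fs_sets inc in auto)
  have U: "measure (bern_seq \<mu>) (\<Union>N. Fs \<theta> N) \<le> 1 - \<mu>^K * c"
    by (rule LIMSEQ_le_const2[OF lim]) (use FN in auto)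
  have Useq: "(\<Union>N. Fs \<theta> N) \<in> sets (bern_seq \<mu>)" using Fs_sets by auto
  have G: "{w \<in> space (bern_seq \<mu>). \<forall>n\<ge>1. sample_mean w n > \<theta>} = space (bern_seq \<mu>) - (\<Union>N. Fs \<theta> N)"
  proof -
    have eq: "sample_mean w n > \<theta> \<longleftrightarrow> \<not> (\<Sum>i<n. (of_bool (w i) - \<theta>)) \<le> 0" if "n \<ge> 1" for w n
    proof -
      have "(\<Sum>i<n. (of_bool (w i) - \<theta>)) = (\<Sum>i<n. of_bool (w i)) - real n * \<theta>"
        by (simp add: sum_subtractf)
      moreover have "real n > 0" using that by simp
      ultimately show ?thesis unfolding sample_mean_def
        by (simp add: pos_less_divide_eq mult.commute not_le)
    qed
    show ?thesis
      by (auto simp: Fs_def space_bern eq) (metis Suc_n_not_le_n nat_le_linear not_less_eq_eq)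
  qed
  have "q_theta \<theta> \<mu> = 1 - measure (bern_seq \<mu>) (\<Union>N. Fs \<theta> N)"
    unfolding q_theta_def G using P.prob_compl[OF Useq] by simp
  also have "\<dots> \<ge> \<mu>^K * c" using U by simp
  finally have q: "q_theta \<theta> \<mu> \<ge> \<mu>^K * c" .
  have "1 + real K * (\<mu> - 1) \<le> (1 + (\<mu> - 1))^K"
    by (rule Bernoulli_inequality) (use A in simp)
  then have mK: "\<mu>^K \<ge> 1 + real K * (\<mu> - 1)" by simp
  have "real K * (1 - \<mu>) \<le> real K * (e/2)" using A unfolding e_def by (intro mult_left_mono) auto
  also have "\<dots> \<le> (1/e + 1) * (e / 2)" using K2 e by (intro mult_right_mono) auto
  also have "\<dots> = (1 + e) / 2" using e by (simp add: field_simps)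
  finally have "\<mu>^K \<ge> 1/3" using mK e by (simp add: algebra_simps)
  moreover have "c \<ge> 0" unfolding c_def by simp
  ultimately have "\<mu>^K * c \<ge> (1/3) * c" by (intro mult_right_mono) auto
  with q final_num show ?thesis unfolding c_def by linarith
qed

end
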